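(* Let $k_n\to\infty$ and $N_n\to\infty$, and for each $n$ let $X_{1,n},\dots,X_{N_n,n}$ be i.i.d. random vectors in $\mathbb{R}^{k_n}$ with $\mathbb E X_{j,n}=0$ and $\mathrm{cov}(X_{j,n})=I_{k_n}$. Assume that for every $\epsilon>0$ $$\lim_n\frac1{N_n}\sum_{j=1}^{N_n}\mathbb E\Big[\|X_{j,n}\|_2^2\,\mathbf 1\{\|X_{j,n}\|_2>\epsilon\sqrt{N_n}\}\Big]=0.$$ Let $\psi_n$ be the characteristic function of $\frac1{\sqrt{N_n}}\sum_{j}X_{j,n}$ and $\phi_n$ that of the $k_n$-dimensional standard Gaussian distribution. Then for each $\epsilon>0$ and $T>0$ there exists $n^0(\epsilon,T)$ such that for all $n>n^0(\epsilon,T)$, $$\sup\{|\psi_n(t)-\phi_n(t)|:\|t\|_2\le T\}<\epsilon.$$ *)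

theory Defs
  imports "HOL-Probability.Probability"
begin

text \<open>Vectors of R^k are represented as functions nat => real, only the
coordinates i < k being relevant (in the product measure they are extensional
on {..<k}).\<close>

definition vnorm :: "nat \<Rightarrow> (nat \<Rightarrow> real) \<Rightarrow> real" where
  "vnorm k x = sqrt (\<Sum>i<k. (x i)\<^sup>2)"

definition Rk :: "nat \<Rightarrow> (nat \<Rightarrow> real) measure" where
  "Rk k = PiM {..<k} (\<lambda>_. borel)"

definition vec_char :: "nat \<Rightarrow> (nat \<Rightarrow> real) measure \<Rightarrow> (nat \<Rightarrow> real) \<Rightarrow> complex" where
  "vec_char k \<mu> t = (CLINT x|\<mu>. iexp (\<Sum>i<k. t i * x i))"

definition std_gauss :: "nat \<Rightarrow> (nat \<Rightarrow> real) measure" where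
  "std_gauss k = PiM {..<k} (\<lambda>_. std_normal_distribution)"

end

theory Submission
  imports Defs
begin


lemma vnorm_sq: "(vnorm k x)\<^sup>2 = (\<Sum>i<k. (x i)\<^sup>2)"
  unfolding vnorm_def by (simp add: sum_nonneg)

lemma vnorm_nonneg: "0 \<le> vnorm k x"
  unfolding vnorm_def by (simp add: sum_nonneg)

lemma vnorm_CS: "\<bar>\<Sum>i<k. t i * x i\<bar> \<le> vnorm k t * vnorm k x"
proof -
  have "\<bar>\<Sum>i<k. t i * x i\<bar> \<le> (\<Sum>i<k. \<bar>t i\<bar> * \<bar>x i\<bar>)"
    by (metis (no_types, lifting) abs_mult sum_abs sum.cong)
  also have "\<dots> \<le> L2_set t {..<k} * L2_set x {..<k}" by (rule L2_set_mult_ineq)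
  finally show ?thesis unfolding vnorm_def L2_set_def by (simp add: power2_eq_square)
qed

lemma exp_quad: fixes x :: real assumes "0 \<le> x" shows "\<bar>1 - x - exp (-x)\<bar> \<le> x\<^sup>2"
proof -
  have e1: "1 + x \<le> exp x" by (rule exp_ge_add_one_self)
  have ep: "exp (-x) = 1 / exp x" by (simp add: exp_minus field_simps)
  have a: "1 - x \<le> exp (-x)" using exp_ge_add_one_self[of "-x"] by simp
  have "exp (-x) \<le> 1 / (1 + x)" unfolding ep using e1 assms
    by (intro divide_left_mono) auto
  also have "1 / (1 + x) = 1 - x + x\<^sup>2 / (1 + x)" using assms
    by (simp add: field_simps power2_eq_square)
  also have "x\<^sup>2 / (1 + x) \<le> x\<^sup>2" using assms
    by (simp add: divide_le_eq mult_le_cancel_left1 zero_le_power2)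
  finally show ?thesis using a by simp
qed

lemma gauss_char: "vec_char k (std_gauss k) t = complex_of_real (exp (- (\<Sum>i<k. (t i)\<^sup>2) / 2))"
proof -
  interpret rd: real_distribution std_normal_distribution by (rule real_dist_normal_dist)
  interpret pps: product_prob_space "\<lambda>_. std_normal_distribution"
    by unfold_locales
  have "vec_char k (std_gauss k) t = (\<integral>x. (\<Prod>i<k. iexp (t i * x i)) \<partial>PiM {..<k} (\<lambda>_. std_normal_distribution))"
    unfolding vec_char_def std_gauss_def
    by (simp add: exp_sum[symmetric] sum_distrib_left)
  also have "\<dots> = (\<Prod>i<k. char std_normal_distribution (t i))"
    unfolding char_def
    by (rule pps.product_integral_prod) (auto intro!: rd.integrable_iexp)
  also have "\<dots> = (\<Prod>i<k. complex_of_real (exp (- (t i)\<^sup>2 / 2)))"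
    by (simp add: char_std_normal_distribution)
  also have "\<dots> = complex_of_real (exp (- (\<Sum>i<k. (t i)\<^sup>2) / 2))"
    by (simp add: exp_sum[symmetric] sum_negf sum_divide_distrib of_real_prod[symmetric])
  finally show ?thesis .
qed



lemma abs_mult_le_sq: fixes a b :: real shows "\<bar>a * b\<bar> \<le> a\<^sup>2 + b\<^sup>2"
proof -
  have h: "(\<bar>a\<bar> - \<bar>b\<bar>)\<^sup>2 = a\<^sup>2 + b\<^sup>2 - 2 * (\<bar>a\<bar>*\<bar>b\<bar>)" by (simp add: power2_diff)
  have "0 \<le> (\<bar>a\<bar> - \<bar>b\<bar>)\<^sup>2" by simp
  moreover have "0 \<le> \<bar>a\<bar>*\<bar>b\<bar>" by simp
  ultimately show ?thesis using h unfolding abs_mult by linarith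
qed

lemma bound_n:
  fixes M :: "'a measure" and X :: "nat \<Rightarrow> 'a \<Rightarrow> nat \<Rightarrow> real" and k N :: nat
    and T \<delta> :: real and t :: "nat \<Rightarrow> real"
  assumes prob: "prob_space M" and N1: "N \<ge> 1"
    and meas: "\<And>j i. j \<in> {1..N} \<Longrightarrow> i < k \<Longrightarrow> (\<lambda>\<omega>. X j \<omega> i) \<in> borel_measurable M"
    and indep: "prob_space.indep_vars M (\<lambda>_. Rk k) (\<lambda>j \<omega>. restrict (X j \<omega>) {..<k}) {1..N}"
    and sq_int: "\<And>j i. j \<in> {1..N} \<Longrightarrow> i < k \<Longrightarrow> integrable M (\<lambda>\<omega>. (X j \<omega> i)\<^sup>2)"
    and mean0: "\<And>j i. j \<in> {1..N} \<Longrightarrow> i < k \<Longrightarrow> (LINT \<omega>|M. X j \<omega> i) = 0"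
    and cov: "\<And>j i l. j \<in> {1..N} \<Longrightarrow> i < k \<Longrightarrow> l < k \<Longrightarrow>
                 (LINT \<omega>|M. X j \<omega> i * X j \<omega> l) = (if i = l then 1 else 0)"
    and T: "T > 0" and d: "\<delta> > 0" and t: "vnorm k t \<le> T"
  shows "cmod (vec_char k (distr M (Rk k) (\<lambda>\<omega>. restrict (\<lambda>i. (1 / sqrt (real N)) *
                                    (\<Sum>j\<in>{1..N}. X j \<omega> i)) {..<k})) t
                - vec_char k (std_gauss k) t)
     \<le> T^3 * \<delta> / 6 + T\<^sup>2 * ((1 / real N) * (\<Sum>j\<in>{1..N}.
                    LINT \<omega>|M. (vnorm k (X j \<omega>))\<^sup>2 *
                      indicator {\<omega>. vnorm k (X j \<omega>) > \<delta> * sqrt (real N)} \<omega>)) + T^4 / (4 * real N)"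
proof -
  interpret prob_space M by (rule prob)
  define c where "c = 1 / sqrt (real N)"
  have Npos: "real N > 0" using N1 by simp
  have cpos: "c > 0" unfolding c_def using Npos by simp
  have c2: "c\<^sup>2 = 1 / real N" unfolding c_def using Npos by (simp add: power_divide)
  have csq: "c * sqrt (real N) = 1" unfolding c_def using Npos by simp
  define s where "s = (\<Sum>i<k. (t i)\<^sup>2)"
  have s0: "0 \<le> s" unfolding s_def by (simp add: sum_nonneg)
  have sT: "s \<le> T\<^sup>2" unfolding s_def vnorm_sq[symmetric]
    using t vnorm_nonneg by (simp add: power_mono)
  define u where "u j \<omega> = (\<Sum>i<k. t i * X j \<omega> i) * c" for j \<omega>
  define L where "L j = (LINT \<omega>|M. (vnorm k (X j \<omega>))\<^sup>2 *
                      indicator {\<omega>. vnorm k (X j \<omega>) > \<delta> * sqrt (real N)} \<omega>)" for j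
  define b where "b = exp (- (s * c\<^sup>2 / 2))"
  define a where "a j = char (distr M borel (u j)) 1" for j

  have um: "u j \<in> borel_measurable M" if j: "j \<in> {1..N}" for j
    unfolding u_def using meas[OF j]
    by (intro borel_measurable_times borel_measurable_const borel_measurable_sum) auto
  have Xint: "integrable M (\<lambda>\<omega>. X j \<omega> i)" if j: "j \<in> {1..N}" and "i < k" for j i
    by (rule square_integrable_imp_integrable[OF meas[OF that] sq_int[OF that]])
  have Xpint: "integrable M (\<lambda>\<omega>. X j \<omega> i * X j \<omega> l)" if j: "j \<in> {1..N}" and "i < k" "l < k" for j i l
  proof (rule Bochner_Integration.integrable_bound)
    show "integrable M (\<lambda>\<omega>. (X j \<omega> i)\<^sup>2 + (X j \<omega> l)\<^sup>2)" using sq_int that by auto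
    show "(\<lambda>\<omega>. X j \<omega> i * X j \<omega> l) \<in> borel_measurable M" using meas that by auto
    show "AE \<omega> in M. norm (X j \<omega> i * X j \<omega> l) \<le> norm ((X j \<omega> i)\<^sup>2 + (X j \<omega> l)\<^sup>2)"
      using abs_mult_le_sq by auto
  qed
  have uint: "integrable M (u j)" if j: "j \<in> {1..N}" for j
    unfolding u_def using Xint[OF j] by auto
  have uE: "(LINT \<omega>|M. u j \<omega>) = 0" if j: "j \<in> {1..N}" for j
    unfolding u_def using Xint[OF j] mean0[OF j] by (simp add: integral_sum)
  have usq: "(u j \<omega>)\<^sup>2 = (\<Sum>i<k. \<Sum>l<k. t i * t l * (X j \<omega> i * X j \<omega> l)) * c\<^sup>2" for j \<omega>
  proof -
    have "(\<Sum>i<k. t i * X j \<omega> i) * (\<Sum>l<k. t l * X j \<omega> l) = (\<Sum>i<k. \<Sum>l<k. t i * t l * (X j \<omega> i * X j \<omega> l))"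
      by (simp add: sum_product mult_ac)
    then show ?thesis unfolding u_def power_mult_distrib by (simp add: power2_eq_square)
  qed
  have u2int: "integrable M (\<lambda>\<omega>. (u j \<omega>)\<^sup>2)" if j: "j \<in> {1..N}" for j
  proof -
    have "integrable M (\<lambda>x. \<Sum>i<k. \<Sum>l<k. t i * t l * (X j x i * X j x l))"
      by (intro Bochner_Integration.integrable_sum Bochner_Integration.integrable_mult_right) (auto intro: Xpint[OF j])
    then show ?thesis unfolding usq by (rule Bochner_Integration.integrable_mult_left)
  qed
  have u2E: "(LINT \<omega>|M. (u j \<omega>)\<^sup>2) = s * c\<^sup>2" if j: "j \<in> {1..N}" for j
  proof -
    have "(LINT \<omega>|M. (u j \<omega>)\<^sup>2) = (\<Sum>i<k. \<Sum>l<k. t i * t l * (if i = l then 1 else 0)) * c\<^sup>2"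
    proof -
      have i1: "integrable M (\<lambda>x. \<Sum>l<k. t i * t l * (X j x i * X j x l))" if "i < k" for i
        by (intro Bochner_Integration.integrable_sum Bochner_Integration.integrable_mult_right) (auto intro: Xpint[OF j] that)
      have "(LINT \<omega>|M. (\<Sum>i<k. \<Sum>l<k. t i * t l * (X j \<omega> i * X j \<omega> l))) =
         (\<Sum>i<k. LINT \<omega>|M. (\<Sum>l<k. t i * t l * (X j \<omega> i * X j \<omega> l)))"
        by (rule Bochner_Integration.integral_sum) (use i1 in auto)
      also have "\<dots> = (\<Sum>i<k. \<Sum>l<k. t i * t l * (if i = l then 1 else 0))"
      proof (rule sum.cong[OF refl])
        fix i assume i: "i \<in> {..<k}"
        have "(LINT \<omega>|M. (\<Sum>l<k. t i * t l * (X j \<omega> i * X j \<omega> l))) =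
           (\<Sum>l<k. LINT \<omega>|M. t i * t l * (X j \<omega> i * X j \<omega> l))"
          by (rule Bochner_Integration.integral_sum) (use Xpint[OF j] i in auto)
        also have "\<dots> = (\<Sum>l<k. t i * t l * (if i = l then 1 else 0))"
          using cov[OF j] i by (intro sum.cong refl) auto
        finally show "(LINT \<omega>|M. (\<Sum>l<k. t i * t l * (X j \<omega> i * X j \<omega> l))) = (\<Sum>l<k. t i * t l * (if i = l then 1 else 0))" .
      qed
      finally show ?thesis unfolding usq by simp
    qed
    also have "(\<Sum>i<k. \<Sum>l<k. t i * t l * (if i = l then 1 else 0)) = s"
      unfolding s_def by (simp add: power2_eq_square if_distrib cong: if_cong)
    finally show ?thesis .
  qed

  have vm: "(\<lambda>\<omega>. vnorm k (X j \<omega>)) \<in> borel_measurable M" if j: "j \<in> {1..N}" for j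
    unfolding vnorm_def using meas[OF j]
    by (intro measurable_compose[OF _ borel_measurable_sqrt] borel_measurable_sum borel_measurable_power) auto
  define g where "g j \<omega> = (vnorm k (X j \<omega>))\<^sup>2 *
                      indicator {\<omega>. vnorm k (X j \<omega>) > \<delta> * sqrt (real N)} \<omega>" for j \<omega>
  have gm: "g j \<in> borel_measurable M" if j: "j \<in> {1..N}" for j
  proof -
    note [measurable] = vm[OF j]
    show ?thesis unfolding g_def by measurable
  qed
  have gint: "integrable M (g j)" if j: "j \<in> {1..N}" for j
  proof (rule Bochner_Integration.integrable_bound)
    show "integrable M (\<lambda>\<omega>. \<Sum>i<k. (X j \<omega> i)\<^sup>2)"
      using sq_int[OF j] by (intro Bochner_Integration.integrable_sum) auto
    show "g j \<in> borel_measurable M" by (rule gm[OF j])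
    show "AE \<omega> in M. norm (g j \<omega>) \<le> norm (\<Sum>i<k. (X j \<omega> i)\<^sup>2)"
      unfolding g_def vnorm_sq by (auto simp: indicator_def sum_nonneg)
  qed
  have LE: "L j = integral\<^sup>L M (g j)" for j unfolding L_def g_def ..

  have capp: "cmod (a j - complex_of_real (1 - s * c\<^sup>2 / 2))
      \<le> 1 / 6 * (LINT \<omega>|M. min (6 * (u j \<omega>)\<^sup>2) (\<bar>u j \<omega>\<bar> ^ 3))" if j: "j \<in> {1..N}" for j
    using char_approx3'[of "u j" "s * c\<^sup>2" "distr M borel (u j)" 1] um[OF j] uint[OF j] u2int[OF j] uE[OF j] u2E[OF j]
    unfolding a_def by simp
  have pw: "min (6 * (u j \<omega>)\<^sup>2) (\<bar>u j \<omega>\<bar> ^ 3) \<le> T * \<delta> * (u j \<omega>)\<^sup>2 + 6 * T\<^sup>2 * c\<^sup>2 * g j \<omega>" for j \<omega>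
  proof -
    have hu: "\<bar>u j \<omega>\<bar> \<le> T * vnorm k (X j \<omega>) * c"
    proof -
      have "\<bar>u j \<omega>\<bar> = \<bar>\<Sum>i<k. t i * X j \<omega> i\<bar> * c" unfolding u_def using cpos by (simp add: abs_mult)
      also have "\<dots> \<le> vnorm k t * vnorm k (X j \<omega>) * c"
        using vnorm_CS cpos by (intro mult_right_mono) auto
      also have "\<dots> \<le> T * vnorm k (X j \<omega>) * c"
        using t cpos vnorm_nonneg by (intro mult_right_mono) auto
      finally show ?thesis .
    qed
    have u2nn: "0 \<le> T * \<delta> * (u j \<omega>)\<^sup>2" using T d by simp
    show ?thesis
    proof (cases "vnorm k (X j \<omega>) > \<delta> * sqrt (real N)")
      case True
      then have g: "g j \<omega> = (vnorm k (X j \<omega>))\<^sup>2" unfolding g_def by simp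
      have "(u j \<omega>)\<^sup>2 \<le> (T * vnorm k (X j \<omega>) * c)\<^sup>2"
        using hu by (metis abs_ge_zero power2_abs power_mono)
      also have "\<dots> = T\<^sup>2 * c\<^sup>2 * (vnorm k (X j \<omega>))\<^sup>2" by (simp add: power_mult_distrib)
      finally have "6 * (u j \<omega>)\<^sup>2 \<le> 6 * T\<^sup>2 * c\<^sup>2 * g j \<omega>" unfolding g by simp
      then show ?thesis using u2nn by linarith
    next
      case False
      then have g: "g j \<omega> = 0" unfolding g_def by simp
      have "\<bar>u j \<omega>\<bar> \<le> T * (\<delta> * sqrt (real N)) * c"
        using hu False T cpos by (smt (verit) mult_le_cancel_left_pos mult_right_mono)
      also have "\<dots> = T * \<delta>" using csq by (simp add: mult_ac)
      finally have h: "\<bar>u j \<omega>\<bar> \<le> T * \<delta>" .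
      have "\<bar>u j \<omega>\<bar> ^ 3 = \<bar>u j \<omega>\<bar> * (u j \<omega>)\<^sup>2"
        by (simp add: power2_eq_square power3_eq_cube abs_mult_self_eq)
      also have "\<dots> \<le> T * \<delta> * (u j \<omega>)\<^sup>2" using h by (intro mult_right_mono) auto
      finally show ?thesis unfolding g by simp
    qed
  qed
  have Eb: "(LINT \<omega>|M. min (6 * (u j \<omega>)\<^sup>2) (\<bar>u j \<omega>\<bar> ^ 3)) \<le> T * \<delta> * (s * c\<^sup>2) + 6 * T\<^sup>2 * c\<^sup>2 * L j"
    if j: "j \<in> {1..N}" for j
  proof -
    have mint: "integrable M (\<lambda>\<omega>. min (6 * (u j \<omega>)\<^sup>2) (\<bar>u j \<omega>\<bar> ^ 3))"
    proof (rule Bochner_Integration.integrable_bound)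
      show "integrable M (\<lambda>\<omega>. 6 * (u j \<omega>)\<^sup>2)" using u2int[OF j] by auto
      show "(\<lambda>\<omega>. min (6 * (u j \<omega>)\<^sup>2) (\<bar>u j \<omega>\<bar> ^ 3)) \<in> borel_measurable M"
        using um[OF j] by measurable
      show "AE \<omega> in M. norm (min (6 * (u j \<omega>)\<^sup>2) (\<bar>u j \<omega>\<bar> ^ 3)) \<le> norm (6 * (u j \<omega>)\<^sup>2)"
        by auto
    qed
    have "(LINT \<omega>|M. min (6 * (u j \<omega>)\<^sup>2) (\<bar>u j \<omega>\<bar> ^ 3)) \<le> (LINT \<omega>|M. T * \<delta> * (u j \<omega>)\<^sup>2 + 6 * T\<^sup>2 * c\<^sup>2 * g j \<omega>)"
      using mint u2int[OF j] gint[OF j] pw by (intro integral_mono) auto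
    also have "\<dots> = T * \<delta> * (s * c\<^sup>2) + 6 * T\<^sup>2 * c\<^sup>2 * L j"
      using u2int[OF j] gint[OF j] u2E[OF j] unfolding LE by simp
    finally show ?thesis .
  qed
  have ab: "cmod (a j - complex_of_real b) \<le> 1/6 * (T * \<delta> * (s * c\<^sup>2) + 6 * T\<^sup>2 * c\<^sup>2 * L j) + (s * c\<^sup>2 / 2)\<^sup>2"
    if j: "j \<in> {1..N}" for j
  proof -
    have "cmod (a j - complex_of_real b) \<le> cmod (a j - complex_of_real (1 - s * c\<^sup>2 / 2)) + cmod (complex_of_real (1 - s * c\<^sup>2 / 2) - complex_of_real b)"
      using norm_triangle_ineq[of "a j - complex_of_real (1 - s * c\<^sup>2 / 2)" "complex_of_real (1 - s * c\<^sup>2 / 2) - complex_of_real b"] by simp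
    also have "cmod (complex_of_real (1 - s * c\<^sup>2 / 2) - complex_of_real b) = \<bar>1 - s * c\<^sup>2 / 2 - b\<bar>"
      by (metis norm_of_real of_real_diff)
    also have "\<bar>1 - s * c\<^sup>2 / 2 - b\<bar> \<le> (s * c\<^sup>2 / 2)\<^sup>2" unfolding b_def
      by (rule exp_quad) (use s0 in simp)
    also have "cmod (a j - complex_of_real (1 - s * c\<^sup>2 / 2)) \<le> 1/6 * (T * \<delta> * (s * c\<^sup>2) + 6 * T\<^sup>2 * c\<^sup>2 * L j)"
      using capp[OF j] Eb[OF j] by simp
    finally show ?thesis by simp
  qed

  define Y where "Y j v = iexp ((\<Sum>i<k. t i * v i) * c)" for j :: nat and v :: "nat \<Rightarrow> real"
  have Ym: "Y j \<in> borel_measurable (Rk k)" for j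
    unfolding Y_def Rk_def by measurable
  have Zeq: "(\<lambda>j \<omega>. Y j (restrict (X j \<omega>) {..<k})) = (\<lambda>j \<omega>. iexp (u j \<omega>))"
  proof -
    have "(\<Sum>i<k. t i * restrict (X j \<omega>) {..<k} i) = (\<Sum>i<k. t i * X j \<omega> i)" for j \<omega>
      by (intro sum.cong) auto
    then show ?thesis unfolding Y_def u_def by (intro ext) simp
  qed
  have ind2: "indep_vars (\<lambda>_. borel) (\<lambda>j \<omega>. iexp (u j \<omega>)) {1..N}"
    using indep_vars_compose2[OF indep, of Y "\<lambda>_. borel"] Ym unfolding Zeq by blast
  have iint: "integrable M (\<lambda>\<omega>. iexp (u j \<omega>))" if j: "j \<in> {1..N}" for j
    using integrable_iexp[of "\<lambda>\<omega>. complex_of_real (u j \<omega>)"] um[OF j] by simp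
  have aE: "a j = (CLINT \<omega>|M. iexp (u j \<omega>))" if j: "j \<in> {1..N}" for j
    unfolding a_def char_def using um[OF j] by (simp add: integral_distr)
  define S where "S \<omega> = restrict (\<lambda>i. (1 / sqrt (real N)) * (\<Sum>j\<in>{1..N}. X j \<omega> i)) {..<k}" for \<omega>
  have Sm: "S \<in> measurable M (Rk k)"
    unfolding S_def Rk_def using meas
    by (intro measurable_restrict borel_measurable_times borel_measurable_const borel_measurable_sum) auto
  have psi: "vec_char k (distr M (Rk k) S) t = (\<Prod>j\<in>{1..N}. a j)"
  proof -
    have im: "(\<lambda>x. iexp (\<Sum>i<k. t i * x i)) \<in> borel_measurable (Rk k)"
      unfolding Rk_def by measurable
    have "vec_char k (distr M (Rk k) S) t = (CLINT \<omega>|M. iexp (\<Sum>i<k. t i * S \<omega> i))"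
      unfolding vec_char_def using Sm im by (subst integral_distr) auto
    also have "\<dots> = (CLINT \<omega>|M. (\<Prod>j\<in>{1..N}. iexp (u j \<omega>)))"
    proof (rule Bochner_Integration.integral_cong[OF refl])
      fix \<omega>
      have "(\<Sum>i<k. t i * S \<omega> i) = (\<Sum>i<k. \<Sum>j\<in>{1..N}. t i * X j \<omega> i * c)"
        unfolding S_def c_def by (simp add: sum_distrib_left mult_ac)
      also have "\<dots> = (\<Sum>j\<in>{1..N}. \<Sum>i<k. t i * X j \<omega> i * c)" by (rule sum.swap)
      also have "\<dots> = (\<Sum>j\<in>{1..N}. u j \<omega>)"
        unfolding u_def by (simp add: sum_distrib_right)
      finally have e: "(\<Sum>i<k. t i * S \<omega> i) = (\<Sum>j\<in>{1..N}. u j \<omega>)" .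
      show "iexp (\<Sum>i<k. t i * S \<omega> i) = (\<Prod>j\<in>{1..N}. iexp (u j \<omega>))"
        unfolding e by (simp add: exp_sum[symmetric] sum_distrib_left)
    qed
    also have "\<dots> = (\<Prod>j\<in>{1..N}. CLINT \<omega>|M. iexp (u j \<omega>))"
      by (rule indep_vars_lebesgue_integral) (use ind2 iint in auto)
    also have "\<dots> = (\<Prod>j\<in>{1..N}. a j)" using aE by simp
    finally show ?thesis .
  qed
  have phi: "vec_char k (std_gauss k) t = (\<Prod>j\<in>{1..N}. complex_of_real b)"
  proof -
    have "(\<Prod>j\<in>{1..N}. complex_of_real b) = complex_of_real (b ^ N)" by simp
    also have "b ^ N = exp (real N * (- (s * c\<^sup>2 / 2)))" unfolding b_def by (rule exp_of_nat_mult[symmetric])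
    also have "real N * (- (s * c\<^sup>2 / 2)) = - s / 2" using c2 Npos by (simp add: field_simps)
    finally show ?thesis using gauss_char[of k t] unfolding s_def by simp
  qed
  have a1: "cmod (a j) \<le> 1" if j: "j \<in> {1..N}" for j
  proof -
    interpret rd: real_distribution "distr M borel (u j)" using um[OF j] by simp
    show ?thesis unfolding a_def by (rule rd.cmod_char_le_1)
  qed
  have b1: "cmod (complex_of_real b) \<le> 1" unfolding b_def using s0 by simp
  have "cmod (vec_char k (distr M (Rk k) S) t - vec_char k (std_gauss k) t)
      \<le> (\<Sum>j\<in>{1..N}. cmod (a j - complex_of_real b))"
    unfolding psi phi by (rule norm_prod_diff) (use a1 b1 in auto)
  also have "\<dots> \<le> (\<Sum>j\<in>{1..N}. 1/6 * (T * \<delta> * (s * c\<^sup>2) + 6 * T\<^sup>2 * c\<^sup>2 * L j) + (s * c\<^sup>2 / 2)\<^sup>2)"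
    using ab by (rule sum_mono)
  also have "\<dots> = real N * (T * \<delta> * (s * c\<^sup>2) / 6 + (s * c\<^sup>2 / 2)\<^sup>2) + T\<^sup>2 * c\<^sup>2 * (\<Sum>j\<in>{1..N}. L j)"
    by (simp add: sum.distrib sum_distrib_left algebra_simps)
  also have "\<dots> = T * \<delta> * s / 6 + s\<^sup>2 / (4 * real N) + T\<^sup>2 * ((1 / real N) * (\<Sum>j\<in>{1..N}. L j))"
    unfolding c2 using Npos by (simp add: field_simps power2_eq_square)
  also have "\<dots> \<le> T^3 * \<delta> / 6 + T^4 / (4 * real N) + T\<^sup>2 * ((1 / real N) * (\<Sum>j\<in>{1..N}. L j))"
  proof -
    have "T * \<delta> * s \<le> T * \<delta> * T\<^sup>2" using sT T d by (intro mult_left_mono) auto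
    then have 1: "T * \<delta> * s / 6 \<le> T^3 * \<delta> / 6" by (simp add: power2_eq_square power3_eq_cube mult_ac)
    have "s\<^sup>2 \<le> (T\<^sup>2)\<^sup>2" using sT s0 by (intro power_mono) auto
    then have "s\<^sup>2 / (4 * real N) \<le> T^4 / (4 * real N)" using Npos by (intro divide_right_mono) auto
    with 1 show ?thesis by linarith
  qed
  finally show ?thesis unfolding S_def L_def by simp

qed


theorem lemma3:
  fixes M :: "nat \<Rightarrow> 'a measure"
    and X :: "nat \<Rightarrow> nat \<Rightarrow> 'a \<Rightarrow> nat \<Rightarrow> real"
    and k N :: "nat \<Rightarrow> nat"
  assumes k_lim: "filterlim k at_top sequentially"
    and N_lim: "filterlim N at_top sequentially"
    and prob: "\<And>n. prob_space (M n)"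
    and meas: "\<And>n j i. j \<in> {1..N n} \<Longrightarrow> i < k n \<Longrightarrow>
                 (\<lambda>\<omega>. X n j \<omega> i) \<in> borel_measurable (M n)"
    and indep: "\<And>n. prob_space.indep_vars (M n) (\<lambda>_. Rk (k n))
                 (\<lambda>j \<omega>. restrict (X n j \<omega>) {..<k n}) {1..N n}"
    and ident: "\<And>n j j'. j \<in> {1..N n} \<Longrightarrow> j' \<in> {1..N n} \<Longrightarrow>
                 distr (M n) (Rk (k n)) (\<lambda>\<omega>. restrict (X n j \<omega>) {..<k n})
               = distr (M n) (Rk (k n)) (\<lambda>\<omega>. restrict (X n j' \<omega>) {..<k n})"
    and sq_int: "\<And>n j i. j \<in> {1..N n} \<Longrightarrow> i < k n \<Longrightarrow>
                 integrable (M n) (\<lambda>\<omega>. (X n j \<omega> i)\<^sup>2)"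
    and mean0: "\<And>n j i. j \<in> {1..N n} \<Longrightarrow> i < k n \<Longrightarrow>
                 (LINT \<omega>|M n. X n j \<omega> i) = 0"
    and cov: "\<And>n j i l. j \<in> {1..N n} \<Longrightarrow> i < k n \<Longrightarrow> l < k n \<Longrightarrow>
                 (LINT \<omega>|M n. X n j \<omega> i * X n j \<omega> l) = (if i = l then 1 else 0)"
    and lindeberg: "\<And>\<epsilon>. \<epsilon> > 0 \<Longrightarrow>
                 (\<lambda>n. (1 / real (N n)) * (\<Sum>j\<in>{1..N n}.
                    LINT \<omega>|M n. (vnorm (k n) (X n j \<omega>))\<^sup>2 *
                      indicator {\<omega>. vnorm (k n) (X n j \<omega>) > \<epsilon> * sqrt (real (N n))} \<omega>))
                 \<longlonglongrightarrow> 0"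
  shows "\<forall>\<epsilon>>0. \<forall>T>0. \<exists>n0. \<forall>n>n0.
           Sup {cmod (vec_char (k n)
                        (distr (M n) (Rk (k n))
                          (\<lambda>\<omega>. restrict (\<lambda>i. (1 / sqrt (real (N n))) *
                                    (\<Sum>j\<in>{1..N n}. X n j \<omega> i)) {..<k n})) t
                      - vec_char (k n) (std_gauss (k n)) t)
                | t. vnorm (k n) t \<le> T} < \<epsilon>"
proof (intro allI impI)
  fix \<epsilon> T :: real assume e: "\<epsilon> > 0" and T: "T > 0"
  define \<delta> where "\<delta> = \<epsilon> / T^3"
  have d: "\<delta> > 0" unfolding \<delta>_def using e T by simp
  define Ls where "Ls n = (1 / real (N n)) * (\<Sum>j\<in>{1..N n}.
                    LINT \<omega>|M n. (vnorm (k n) (X n j \<omega>))\<^sup>2 *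
                      indicator {\<omega>. vnorm (k n) (X n j \<omega>) > \<delta> * sqrt (real (N n))} \<omega>)" for n
  have "Ls \<longlonglongrightarrow> 0" unfolding Ls_def by (rule lindeberg[OF d])
  then have ev1: "eventually (\<lambda>n. \<bar>Ls n\<bar> < \<epsilon> / (3 * T\<^sup>2)) sequentially"
    using e T by (auto simp: tendsto_iff dist_real_def)
  define Z where "Z = nat \<lceil>T^4 / \<epsilon>\<rceil> + 1"
  have ev2: "eventually (\<lambda>n. Z \<le> N n) sequentially"
    using N_lim by (simp add: filterlim_at_top)
  obtain n0 where n0: "\<And>n. n \<ge> n0 \<Longrightarrow> \<bar>Ls n\<bar> < \<epsilon> / (3 * T\<^sup>2) \<and> Z \<le> N n"
    using eventually_conj[OF ev1 ev2] unfolding eventually_sequentially by blast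
  show "\<exists>n0. \<forall>n>n0.
           Sup {cmod (vec_char (k n)
                        (distr (M n) (Rk (k n))
                          (\<lambda>\<omega>. restrict (\<lambda>i. (1 / sqrt (real (N n))) *
                                    (\<Sum>j\<in>{1..N n}. X n j \<omega> i)) {..<k n})) t
                      - vec_char (k n) (std_gauss (k n)) t)
                | t. vnorm (k n) t \<le> T} < \<epsilon>"
  proof (intro exI allI impI)
    fix n assume "n > n0"
    then have hn: "\<bar>Ls n\<bar> < \<epsilon> / (3 * T\<^sup>2)" "Z \<le> N n" using n0 by auto
    have N1: "N n \<ge> 1" using hn(2) unfolding Z_def by simp
    have NZ: "real (N n) > T^4 / \<epsilon>"
    proof -
      have "T^4 / \<epsilon> \<le> real (nat \<lceil>T^4 / \<epsilon>\<rceil>)" by linarith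
      also have "\<dots> < real Z" unfolding Z_def by simp
      also have "\<dots> \<le> real (N n)" using hn(2) by simp
      finally show ?thesis .
    qed
    have Npos: "real (N n) > 0" using N1 by simp
    define B where "B = T^3 * \<delta> / 6 + T\<^sup>2 * Ls n + T^4 / (4 * real (N n))"
    have bnd: "cmod (vec_char (k n)
                        (distr (M n) (Rk (k n))
                          (\<lambda>\<omega>. restrict (\<lambda>i. (1 / sqrt (real (N n))) *
                                    (\<Sum>j\<in>{1..N n}. X n j \<omega> i)) {..<k n})) t
                      - vec_char (k n) (std_gauss (k n)) t) \<le> B" if "vnorm (k n) t \<le> T" for t
      unfolding B_def Ls_def
      by (rule bound_n[OF prob N1 meas indep sq_int mean0 cov T d that])
    have Bl: "B < \<epsilon>"
    proof -
      have 1: "T^3 * \<delta> / 6 = \<epsilon> / 6" unfolding \<delta>_def using T by simp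
      have "T\<^sup>2 * Ls n \<le> T\<^sup>2 * \<bar>Ls n\<bar>" using T by (intro mult_left_mono) auto
      also have "\<dots> \<le> T\<^sup>2 * (\<epsilon> / (3 * T\<^sup>2))" using hn(1) T by (intro mult_left_mono) auto
      also have "\<dots> = \<epsilon> / 3" using T by simp
      finally have 2: "T\<^sup>2 * Ls n \<le> \<epsilon> / 3" .
      have "T^4 < \<epsilon> * real (N n)" using NZ e by (simp add: divide_less_eq mult.commute)
      then have 3: "T^4 / (4 * real (N n)) < \<epsilon> / 4" using Npos by (simp add: divide_less_eq)
      show ?thesis unfolding B_def using 1 2 3 e by linarith
    qed
    have ne: "{cmod (vec_char (k n)
                        (distr (M n) (Rk (k n))
                          (\<lambda>\<omega>. restrict (\<lambda>i. (1 / sqrt (real (N n))) *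
                                    (\<Sum>j\<in>{1..N n}. X n j \<omega> i)) {..<k n})) t
                      - vec_char (k n) (std_gauss (k n)) t)
                | t. vnorm (k n) t \<le> T} \<noteq> {}"
    proof -
      have "vnorm (k n) (\<lambda>_. 0) \<le> T" using T by (simp add: vnorm_def)
      then show ?thesis by blast
    qed
    have "Sup {cmod (vec_char (k n)
                        (distr (M n) (Rk (k n))
                          (\<lambda>\<omega>. restrict (\<lambda>i. (1 / sqrt (real (N n))) *
                                    (\<Sum>j\<in>{1..N n}. X n j \<omega> i)) {..<k n})) t
                      - vec_char (k n) (std_gauss (k n)) t)
                | t. vnorm (k n) t \<le> T} \<le> B"
      by (rule cSup_least[OF ne]) (use bnd in blast)
    with Bl show "Sup {cmod (vec_char (k n)
                        (distr (M n) (Rk (k n))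
                          (\<lambda>\<omega>. restrict (\<lambda>i. (1 / sqrt (real (N n))) *
                                    (\<Sum>j\<in>{1..N n}. X n j \<omega> i)) {..<k n})) t
                      - vec_char (k n) (std_gauss (k n)) t)
                | t. vnorm (k n) t \<le> T} < \<epsilon>" by linarith
  qed
qed

end
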